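(* Let $E$ be a Banach space and let $\mathscr{S}_1,\dots,\mathscr{S}_n\subseteq\mathcal{L}(E)$ be mean ergodic operator semigroups such that $ST=TS$ whenever $T\in\mathscr{S}_i$, $S\in\mathscr{S}_j$ with $i\neq j$. Then $$\ker(\mathscr{S}_1-\mathrm{Id})\cdots(\mathscr{S}_n-\mathrm{Id})=\ker(\mathscr{S}_1-\mathrm{Id})+\cdots+\ker(\mathscr{S}_n-\mathrm{Id}).$$
   Context: $\mathcal{L}(E)$ denotes the bounded linear operators on $E$. A semigroup $\mathscr{S}\subseteq\mathcal{L}(E)$ is mean ergodic if the closure (in the strong operator topology) of its convex hull contains a zero element $P$, i.e. $PT=P=TP$ for all $T\in\mathscr{S}$. For a set $\mathscr{A}\subseteq\mathcal{L}(E)$, $\ker\mathscr{A}=\bigcap_{A\in\mathscr{A}}\ker A$; here $\ker(\mathscr{S}_j-\mathrm{Id})=\bigcap_{S\in\mathscr{S}_j}\ker(S-\mathrm{Id})$, and $\ker(\mathscr{S}_1-\mathrm{Id})\cdots(\mathscr{S}_n-\mathrm{Id})$ is the intersection of $\ker\big((S_1-\mathrm{Id})\cdots(S_n-\mathrm{Id})\big)$ over all choices $S_j\in\mathscr{S}_j$. *)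

theory Defs
  imports "HOL-Analysis.Analysis"
begin

definition op_semigroup :: "('a::real_normed_vector \<Rightarrow>\<^sub>L 'a) set \<Rightarrow> bool" where
  "op_semigroup \<SS> \<longleftrightarrow> (\<forall>S\<in>\<SS>. \<forall>T\<in>\<SS>. S o\<^sub>L T \<in> \<SS>)"

definition sot_closure :: "('a::real_normed_vector \<Rightarrow>\<^sub>L 'a) set \<Rightarrow> ('a \<Rightarrow>\<^sub>L 'a) set" where
  "sot_closure A = {P. \<forall>F. finite F \<longrightarrow> (\<forall>e>0. \<exists>T\<in>A. \<forall>x\<in>F. norm (blinfun_apply T x - blinfun_apply P x) < e)}"

definition is_zero_of :: "('a::real_normed_vector \<Rightarrow>\<^sub>L 'a) \<Rightarrow> ('a \<Rightarrow>\<^sub>L 'a) set \<Rightarrow> bool" where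
  "is_zero_of P \<SS> \<longleftrightarrow> (\<forall>T\<in>\<SS>. P o\<^sub>L T = P \<and> T o\<^sub>L P = P)"

definition mean_ergodic :: "('a::real_normed_vector \<Rightarrow>\<^sub>L 'a) set \<Rightarrow> bool" where
  "mean_ergodic \<SS> \<longleftrightarrow> (\<exists>P\<in>sot_closure (convex hull \<SS>). is_zero_of P \<SS>)"

definition fix_space :: "('a::real_normed_vector \<Rightarrow>\<^sub>L 'a) set \<Rightarrow> 'a set" where
  "fix_space \<SS> = {x. \<forall>S\<in>\<SS>. blinfun_apply (S - id_blinfun) x = 0}"

definition prod_minus_id :: "nat \<Rightarrow> (nat \<Rightarrow> ('a::real_normed_vector \<Rightarrow>\<^sub>L 'a)) \<Rightarrow> ('a \<Rightarrow>\<^sub>L 'a)" where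
  "prod_minus_id n s = foldr (\<lambda>j A. (s j - id_blinfun) o\<^sub>L A) [0..<n] id_blinfun"

definition prod_kernel :: "nat \<Rightarrow> (nat \<Rightarrow> ('a::real_normed_vector \<Rightarrow>\<^sub>L 'a) set) \<Rightarrow> 'a set" where
  "prod_kernel n \<SS> = {x. \<forall>s. (\<forall>j<n. s j \<in> \<SS> j) \<longrightarrow> blinfun_apply (prod_minus_id n s) x = 0}"

definition sum_fix_spaces :: "nat \<Rightarrow> (nat \<Rightarrow> ('a::real_normed_vector \<Rightarrow>\<^sub>L 'a) set) \<Rightarrow> 'a set" where
  "sum_fix_spaces n \<SS> = {x. \<exists>y. (\<forall>j<n. y j \<in> fix_space (\<SS> j)) \<and> x = (\<Sum>j<n. y j)}"

end

theory Submission
  imports Defs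
begin

definition pr :: "nat list \<Rightarrow> (nat \<Rightarrow> ('a::real_normed_vector \<Rightarrow>\<^sub>L 'a)) \<Rightarrow> ('a \<Rightarrow>\<^sub>L 'a)" where
  "pr xs s = foldr (\<lambda>j A. (s j - id_blinfun) o\<^sub>L A) xs id_blinfun"

lemma pr_Nil[simp]: "blinfun_apply (pr [] s) x = x"
  by (simp add: pr_def)

lemma pr_Cons[simp]: "blinfun_apply (pr (j#xs) s) x = s j (pr xs s x) - pr xs s x"
  by (simp add: pr_def blinfun.diff_left)

lemma pr_append: "blinfun_apply (pr (xs@ys) s) x = pr xs s (pr ys s x)"
  by (induction xs arbitrary: x) (simp_all add: pr_def)

lemma pr_cong: "(\<And>i. i \<in> set xs \<Longrightarrow> s i = s' i) \<Longrightarrow> pr xs s = pr xs s'"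
  unfolding pr_def by (induction xs) simp_all

lemma pr_comm:
  fixes A :: "'a::real_normed_vector \<Rightarrow>\<^sub>L 'a" and s :: "nat \<Rightarrow> ('a \<Rightarrow>\<^sub>L 'a)"
  assumes "\<And>i w. i \<in> set xs \<Longrightarrow> A (s i w) = s i (A w)"
  shows "blinfun_apply A (pr xs s x) = pr xs s (A x)"
  using assms by (induction xs arbitrary: x) (simp_all add: blinfun.diff_right)

lemma prod_split:
  assumes "j < n"
  shows "blinfun_apply (prod_minus_id n s) x
     = pr [0..<j] s (s j (pr [Suc j..<n] s x)) - pr [0..<j] s (pr [Suc j..<n] s x)"
proof -
  have "[0..<n] = [0..<j] @ [j..<n]"
    using upt_add_eq_append[of 0 j "n-j"] assms by simp
  also have "[j..<n] = j # [Suc j..<n]" using upt_conv_Cons assms by simp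
  finally have "[0..<n] = [0..<j] @ j # [Suc j..<n]" .
  then have "prod_minus_id n s = pr ([0..<j] @ j # [Suc j..<n]) s"
    by (simp add: prod_minus_id_def pr_def)
  then show ?thesis by (simp add: pr_append blinfun.diff_right)
qed

lemma sot_closed:
  fixes L1 L2 :: "'a::real_normed_vector \<Rightarrow>\<^sub>L 'a"
  assumes "P \<in> sot_closure {A::'a \<Rightarrow>\<^sub>L 'a. L1 (A y) + L2 (A z) = c}"
  shows "L1 (P y) + L2 (P z) = c"
proof (rule ccontr)
  assume ne: "L1 (P y) + L2 (P z) \<noteq> c"
  define d where "d = norm (L1 (P y) + L2 (P z) - c)"
  define K where "K = norm L1 + norm L2 + 1"
  have d: "d > 0" using ne by (simp add: d_def)
  have K: "K > 0" by (simp add: K_def add_nonneg_pos)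
  define e where "e = d / K"
  have e: "e > 0" using d K by (simp add: e_def)
  have "\<exists>T\<in>{A::'a \<Rightarrow>\<^sub>L 'a. L1 (A y) + L2 (A z) = c}. \<forall>x\<in>{y,z}. norm (T x - P x) < e"
  proof -
    have "\<forall>F. finite F \<longrightarrow> (\<forall>e>0. \<exists>T\<in>{A::'a \<Rightarrow>\<^sub>L 'a. L1 (A y) + L2 (A z) = c}. \<forall>x\<in>F. norm (T x - P x) < e)"
      using assms by (simp only: sot_closure_def mem_Collect_eq)
    then have "\<forall>e>0. \<exists>T\<in>{A::'a \<Rightarrow>\<^sub>L 'a. L1 (A y) + L2 (A z) = c}. \<forall>x\<in>{y,z}. norm (T x - P x) < e"
      by (rule allE[where x="{y,z}"]) simp
    then show ?thesis using e by blast
  qed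
  then obtain A where A: "L1 (A y) + L2 (A z) = c" and Ay: "norm (A y - P y) < e"
     and Az: "norm (A z - P z) < e" by auto
  have eq: "L1 (P y) + L2 (P z) - c = L1 (P y - A y) + L2 (P z - A z)"
    unfolding A[symmetric] blinfun.diff_right by simp
  have "d \<le> norm (L1 (P y - A y)) + norm (L2 (P z - A z))"
    unfolding d_def eq by (rule norm_triangle_ineq)
  also have "\<dots> \<le> norm L1 * norm (P y - A y) + norm L2 * norm (P z - A z)"
    by (intro add_mono norm_blinfun)
  also have "\<dots> \<le> norm L1 * e + norm L2 * e"
    using Ay Az by (intro add_mono mult_left_mono) (auto simp: norm_minus_commute)
  also have "\<dots> < K * e" using e by (simp add: K_def algebra_simps)
  also have "K * e = d" using K by (simp add: e_def)
  finally show False by simp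
qed

lemma sot_hull:
  fixes L1 L2 :: "'a::real_normed_vector \<Rightarrow>\<^sub>L 'a" and S :: "('a \<Rightarrow>\<^sub>L 'a) set"
  assumes "\<And>A. A \<in> S \<Longrightarrow> L1 (A y) + L2 (A z) = c" "P \<in> sot_closure (convex hull S)"
  shows "L1 (P y) + L2 (P z) = c"
proof -
  let ?Z = "{A::'a \<Rightarrow>\<^sub>L 'a. L1 (A y) + L2 (A z) = c}"
  have conv: "convex ?Z"
    unfolding convex_def
  proof (intro allI impI ballI, simp)
    fix A B :: "'a \<Rightarrow>\<^sub>L 'a" and u v :: real
    assume "L1 (A y) + L2 (A z) = c" "L1 (B y) + L2 (B z) = c" "u + v = 1"
    then have "u *\<^sub>R (L1 (A y) + L2 (A z)) + v *\<^sub>R (L1 (B y) + L2 (B z)) = c"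
      by (simp add: scaleR_add_left[symmetric])
    then show "L1 ((u *\<^sub>R A + v *\<^sub>R B) y) + L2 ((u *\<^sub>R A + v *\<^sub>R B) z) = c"
      by (simp add: blinfun.add_left blinfun.scaleR_left blinfun.add_right
          blinfun.scaleR_right algebra_simps)
  qed
  have "convex hull S \<subseteq> ?Z"
    by (rule hull_minimal) (use assms(1) conv in auto)
  then have "P \<in> sot_closure ?Z"
    using assms(2) unfolding sot_closure_def by blast
  then show ?thesis by (rule sot_closed)
qed

theorem theorem1p3:
  fixes \<SS> :: "nat \<Rightarrow> ('a::banach \<Rightarrow>\<^sub>L 'a) set" and n :: nat
  assumes "n \<ge> 1"
    and "\<And>j. j < n \<Longrightarrow> op_semigroup (\<SS> j)"
    and "\<And>j. j < n \<Longrightarrow> mean_ergodic (\<SS> j)"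
    and "\<And>i j S T. i < n \<Longrightarrow> j < n \<Longrightarrow> i \<noteq> j \<Longrightarrow> T \<in> \<SS> i \<Longrightarrow> S \<in> \<SS> j
            \<Longrightarrow> S o\<^sub>L T = T o\<^sub>L S"
  shows "prod_kernel n \<SS> = sum_fix_spaces n \<SS>"
proof
  have comm: "S (T w) = T (S w)" if "i < n" "j < n" "i \<noteq> j" "T \<in> \<SS> i" "S \<in> \<SS> j" for i j S T w
    using assms(4)[OF that] by (metis blinfun_apply_blinfun_compose)
  have fix_scale: "a *\<^sub>R w \<in> fix_space X" if "w \<in> fix_space X" for a w X
    using that by (simp add: fix_space_def blinfun.scaleR_right)
  show "sum_fix_spaces n \<SS> \<subseteq> prod_kernel n \<SS>"
  proof
    fix x assume "x \<in> sum_fix_spaces n \<SS>"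
    then obtain y where y: "\<And>j. j < n \<Longrightarrow> y j \<in> fix_space (\<SS> j)" and x: "x = (\<Sum>j<n. y j)"
      unfolding sum_fix_spaces_def by blast
    show "x \<in> prod_kernel n \<SS>"
      unfolding prod_kernel_def
    proof (intro CollectI allI impI)
      fix s assume s: "\<forall>j<n. s j \<in> \<SS> j"
      have "blinfun_apply (prod_minus_id n s) (y j) = 0" if j: "j < n" for j
      proof -
        have sy: "s j (y j) = y j" using y[OF j] s j
          by (auto simp: fix_space_def blinfun.diff_left)
        have "s j (pr [Suc j..<n] s (y j)) = pr [Suc j..<n] s (s j (y j))"
        proof (rule pr_comm)
          fix i w assume "i \<in> set [Suc j..<n]"
          then show "s j (s i w) = s i (s j w)"
            using comm[of i j "s i" "s j" w] s j by auto
        qed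
        then show ?thesis using prod_split[OF j, of s "y j"] sy by simp
      qed
      then show "blinfun_apply (prod_minus_id n s) x = 0"
        unfolding x by (simp add: blinfun.sum_right)
    qed
  qed
  show "prod_kernel n \<SS> \<subseteq> sum_fix_spaces n \<SS>"
  proof
    fix x assume xk: "x \<in> prod_kernel n \<SS>"
    have "\<forall>j. \<exists>P. j < n \<longrightarrow> P \<in> sot_closure (convex hull \<SS> j) \<and> is_zero_of P (\<SS> j)"
      using assms(3) unfolding mean_ergodic_def by blast
    then obtain P where P: "\<And>j. j < n \<Longrightarrow> P j \<in> sot_closure (convex hull \<SS> j)"
      and Pz: "\<And>j. j < n \<Longrightarrow> is_zero_of (P j) (\<SS> j)"
      by metis
    have fixP: "P j w \<in> fix_space (\<SS> j)" if "j < n" for j w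
      using Pz[OF that] unfolding is_zero_of_def fix_space_def
      by (auto simp: blinfun.diff_left) (metis blinfun_apply_blinfun_compose)
    have commTP: "P j (T w) = T (P j w)" if "i < n" "j < n" "i \<noteq> j" "T \<in> \<SS> i" for i j T w
    proof -
      have "id_blinfun (P j (T w)) + (- T) (P j w) = 0"
        by (rule sot_hull[OF _ P[OF that(2)]])
           (use comm[OF that] in \<open>simp add: uminus_blinfun.rep_eq\<close>)
      then show ?thesis by (simp add: uminus_blinfun.rep_eq)
    qed
    have commPP: "P i (P j w) = P j (P i w)" if "i < n" "j < n" "i \<noteq> j" for i j w
    proof -
      have "id_blinfun (P i (P j w)) + (- P j) (P i w) = 0"
        by (rule sot_hull[OF _ P[OF that(1)]])
           (use commTP[OF that(1,2,3)] in \<open>simp add: uminus_blinfun.rep_eq\<close>)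
      then show ?thesis by (simp add: uminus_blinfun.rep_eq)
    qed
    have step: "\<forall>s. (\<forall>i<n. s i \<in> (if i < k then {P i} else \<SS> i)) \<longrightarrow> blinfun_apply (prod_minus_id n s) x = 0"
      if "k \<le> n" for k
      using that
    proof (induction k)
      case 0
      then show ?case using xk unfolding prod_kernel_def by auto
    next
      case (Suc k)
      show ?case
      proof (intro allI impI)
        fix s assume s: "\<forall>i<n. s i \<in> (if i < Suc k then {P i} else \<SS> i)"
        have k: "k < n" using Suc by simp
        define L where "L = pr [0..<k] s"
        define y where "y = pr [Suc k..<n] s x"
        have "L (P k y) + (0::'a\<Rightarrow>\<^sub>L'a) (P k y) = L y"
        proof (rule sot_hull[OF _ P[OF k]])
          fix A assume A: "A \<in> \<SS> k"
          let ?s = "s(k := A)"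
          have "\<forall>i<n. ?s i \<in> (if i < k then {P i} else \<SS> i)"
            using s A by auto
          then have "blinfun_apply (prod_minus_id n ?s) x = 0"
            using Suc by auto
          moreover have "pr [0..<k] ?s = L" unfolding L_def by (rule pr_cong) auto
          moreover have "pr [Suc k..<n] ?s = pr [Suc k..<n] s" by (rule pr_cong) auto
          ultimately show "L (A y) + (0::'a\<Rightarrow>\<^sub>L'a) (A y) = L y"
            using prod_split[OF k, of ?s x] by (simp add: y_def)
        qed
        moreover have "s k = P k" using s k by auto
        ultimately show "blinfun_apply (prod_minus_id n s) x = 0"
          using prod_split[OF k, of s x] by (simp add: L_def y_def)
      qed
    qed
    have zero: "pr [0..<n] P x = 0"
      using step[of n] by (simp add: prod_minus_id_def pr_def)
    define D where "D k = pr [0..<k] P x" for k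
    define c where "c k = ((-1::real)^k) *\<^sub>R D k" for k
    define y where "y k = ((-1::real)^k) *\<^sub>R P k (D k)" for k
    have Dsuc: "D (Suc k) = pr [0..<k] P (P k x) - D k" for k
      by (simp add: D_def pr_append blinfun.diff_right)
    have DP: "pr [0..<k] P (P k x) = P k (D k)" if "k < n" for k
      unfolding D_def by (rule pr_comm[symmetric]) (use commPP that in auto)
    have yc: "y k = c k - c (Suc k)" if "k < n" for k
    proof -
      have e: "D k + D (Suc k) = P k (D k)" using DP[OF that] Dsuc[of k] by simp
      have "c k - c (Suc k) = ((-1::real)^k) *\<^sub>R (D k + D (Suc k))"
        by (simp add: c_def scaleR_add_right)
      then show ?thesis by (simp add: y_def e)
    qed
    have "(\<Sum>k<n. y k) = (\<Sum>k<n. c k - c (Suc k))" by (rule sum.cong) (auto simp: yc)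
    also have "\<dots> = c 0 - c n" by (rule sum_lessThan_telescope')
    also have "\<dots> = x" by (simp add: c_def D_def zero)
    finally have "x = (\<Sum>k<n. y k)" by simp
    moreover have "\<forall>j<n. y j \<in> fix_space (\<SS> j)"
      unfolding y_def by (blast intro: fixP fix_scale)
    ultimately show "x \<in> sum_fix_spaces n \<SS>" unfolding sum_fix_spaces_def by blast
  qed
qed

end
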